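(* Let $v_1,\dots,v_m\in\mathbb{Q}^n$, let $P=P_{v_1,\dots,v_m}$, and let $a_1\le b_1,\dots,a_m\le b_m$ be elements of $\mathbb{Q}_P$. If $w\in\sum_{i=1}^m\mathbb{Q}_Pv_i$ can be written as $w=\sum_{i=1}^m x_iv_i$ with rational numbers $a_i\le x_i\le b_i$ ($i=1,\dots,m$), then there exist $y_1,\dots,y_m\in\mathbb{Q}_P$ with $a_i\le y_i\le b_i$ for all $i$ and $w=\sum_{i=1}^m y_iv_i$.
   Context: An elementary integral relation among $v_1,\dots,v_m$ is a relation $\sum_{i=1}^m a_iv_i=0$ with $a_i\in\mathbb{Z}$ not all zero, whose support $\{i:a_i\neq0\}$ is minimal (inclusion-wise) among supports of nontrivial linear relations, and whose coefficients have greatest common divisor $1$. $P_{v_1,\dots,v_m}$ is the (finite) set of primes $p$ for which there exists an elementary integral relation $\sum a_iv_i=0$ with $p\mid\prod_{a_i\neq0}a_i$. For a set of primes $P$, $\mathbb{Q}_P=\{a/b: a,b\in\mathbb{Z},\ b\neq0,\ \text{all prime factors of } b \text{ lie in } P\}$ (so $\mathbb{Q}_\emptyset=\mathbb{Z}$). *)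

theory Defs
  imports Complex_Main "HOL-Computational_Algebra.Primes"
begin

text \<open>Vectors v_1..v_m in Q^n are encoded as v :: nat => nat => rat, where
  v i (for i < m) is the i-th vector and v i j (for j < n) its j-th coordinate.\<close>

definition supp :: "nat \<Rightarrow> (nat \<Rightarrow> 'a::zero) \<Rightarrow> nat set" where
  "supp m c = {i. i < m \<and> c i \<noteq> 0}"

definition lin_rel :: "(nat \<Rightarrow> nat \<Rightarrow> rat) \<Rightarrow> nat \<Rightarrow> nat \<Rightarrow> (nat \<Rightarrow> rat) \<Rightarrow> bool" where
  "lin_rel v m n c \<longleftrightarrow> (\<exists>i<m. c i \<noteq> 0) \<and> (\<forall>j<n. (\<Sum>i<m. c i * v i j) = 0)"

definition elem_int_rel :: "(nat \<Rightarrow> nat \<Rightarrow> rat) \<Rightarrow> nat \<Rightarrow> nat \<Rightarrow> (nat \<Rightarrow> int) \<Rightarrow> bool" where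
  "elem_int_rel v m n a \<longleftrightarrow>
     lin_rel v m n (\<lambda>i. of_int (a i)) \<and>
     (\<forall>c. lin_rel v m n c \<longrightarrow> \<not> (supp m c \<subset> supp m a)) \<and>
     Gcd (a ` {..<m}) = 1"

definition P_set :: "(nat \<Rightarrow> nat \<Rightarrow> rat) \<Rightarrow> nat \<Rightarrow> nat \<Rightarrow> nat set" where
  "P_set v m n = {p. prime p \<and>
     (\<exists>a. elem_int_rel v m n a \<and> int p dvd (\<Prod>i\<in>supp m a. a i))}"

definition Q_loc :: "nat set \<Rightarrow> rat set" where
  "Q_loc P = {q. \<exists>(a::int) (b::int). b \<noteq> 0 \<and> q = of_int a / of_int b \<and>
                 (\<forall>p::nat. prime p \<and> int p dvd b \<longrightarrow> p \<in> P)}"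

end

theory Submission imports Defs begin

definition goodint :: "nat set \<Rightarrow> int \<Rightarrow> bool" where
  "goodint P b \<longleftrightarrow> b \<noteq> 0 \<and> (\<forall>p::nat. prime p \<and> int p dvd b \<longrightarrow> p \<in> P)"

lemma goodint_mult: "goodint P b \<Longrightarrow> goodint P d \<Longrightarrow> goodint P (b*d)"
  unfolding goodint_def
proof (intro conjI allI impI)
  assume b: "b \<noteq> 0 \<and> (\<forall>p::nat. prime p \<and> int p dvd b \<longrightarrow> p \<in> P)"
     and d: "d \<noteq> 0 \<and> (\<forall>p::nat. prime p \<and> int p dvd d \<longrightarrow> p \<in> P)"
  show "b * d \<noteq> 0" using b d by simp
  fix p :: nat assume p: "prime p \<and> int p dvd b * d"
  then have "prime (int p)" by simp
  then have "int p dvd b \<or> int p dvd d" using p prime_dvd_mult_iff by blast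
  then show "p \<in> P" using b d p by blast
qed

lemma Q_loc_iff: "q \<in> Q_loc P \<longleftrightarrow> (\<exists>a b. goodint P b \<and> q = of_int a / of_int b)"
  unfolding Q_loc_def goodint_def mem_Collect_eq by blast

lemma goodint_1: "goodint P 1"
  unfolding goodint_def
proof (intro conjI allI impI)
  fix p :: nat assume p: "prime p \<and> int p dvd 1"
  then have "p dvd 1" using int_dvd_int_iff[of p 1] by simp
  then have "p = 1" by simp
  then show "p \<in> P" using p by simp
qed simp

lemma Q_loc_int: "of_int k \<in> Q_loc P"
  unfolding Q_loc_iff using goodint_1 by (intro exI[of _ k] exI[of _ 1]) auto

lemma Q_loc_0: "0 \<in> Q_loc P" using Q_loc_int[of 0] by simp

lemma Q_loc_add: assumes "q \<in> Q_loc P" "r \<in> Q_loc P" shows "q + r \<in> Q_loc P"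
proof -
  obtain a b c d where ab: "goodint P b" "q = of_int a / of_int b" and cd: "goodint P d" "r = of_int c / of_int d"
    using assms unfolding Q_loc_iff by blast
  have "q + r = of_int (a*d + c*b) / of_int (b*d)"
    using ab cd by (simp add: goodint_def field_simps)
  then show ?thesis unfolding Q_loc_iff using goodint_mult[OF ab(1) cd(1)] by blast
qed

lemma Q_loc_mult: assumes "q \<in> Q_loc P" "r \<in> Q_loc P" shows "q * r \<in> Q_loc P"
proof -
  obtain a b c d where ab: "goodint P b" "q = of_int a / of_int b" and cd: "goodint P d" "r = of_int c / of_int d"
    using assms unfolding Q_loc_iff by blast
  have "q * r = of_int (a*c) / of_int (b*d)"
    using ab cd by (simp add: goodint_def field_simps)
  then show ?thesis unfolding Q_loc_iff using goodint_mult[OF ab(1) cd(1)] by blast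
qed

lemma Q_loc_uminus: assumes "q \<in> Q_loc P" shows "- q \<in> Q_loc P"
  using Q_loc_mult[OF Q_loc_int[of "-1"] assms] by simp

lemma Q_loc_diff: assumes "q \<in> Q_loc P" "r \<in> Q_loc P" shows "q - r \<in> Q_loc P"
  using Q_loc_add[OF assms(1) Q_loc_uminus[OF assms(2)]] by simp

lemma Q_loc_div: assumes "q \<in> Q_loc P" "goodint P e" shows "q / of_int e \<in> Q_loc P"
proof -
  obtain a b where ab: "goodint P b" "q = of_int a / of_int b"
    using assms unfolding Q_loc_iff by blast
  have "q / of_int e = of_int a / of_int (b*e)"
    using ab assms by (simp add: goodint_def field_simps)
  then show ?thesis unfolding Q_loc_iff using goodint_mult[OF ab(1) assms(2)] by blast
qed


lemma common_denom: fixes m :: nat shows "\<exists>D::int. D \<noteq> 0 \<and> (\<forall>i<m. of_int D * (c i :: rat) \<in> \<int>)"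
proof (induction m)
  case 0 then show ?case by (intro exI[of _ 1]) auto
next
  case (Suc m)
  then obtain D where D: "D \<noteq> 0" "\<forall>i<m. of_int D * c i \<in> \<int>" by blast
  obtain p q where pq: "quotient_of (c m) = (p, q)" by (cases "quotient_of (c m)")
  have q: "q > 0" using quotient_of_denom_pos[OF pq] .
  have cm: "c m = of_int p / of_int q" using quotient_of_div[OF pq] .
  show ?case
  proof (intro exI[of _ "D*q"] conjI allI impI)
    show "D * q \<noteq> 0" using D q by simp
    fix i assume "i < Suc m"
    then consider "i < m" | "i = m" by linarith
    then show "of_int (D*q) * c i \<in> \<int>"
    proof cases
      case 1
      then have "of_int (D*q) * c i = of_int q * (of_int D * c i)" by simp
      then show ?thesis using D(2) 1 by (metis Ints_mult Ints_of_int)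
    next
      case 2
      have "of_int (D*q) * c m = (of_int (D * p) :: rat)" using cm q by simp
      then show ?thesis using 2 by (metis Ints_of_int)
    qed
  qed
qed

lemma supp_of_int: "supp m (\<lambda>i. (of_int (e i) :: rat)) = supp m e"
  unfolding supp_def by auto

lemma normalize_rel:
  assumes rel: "lin_rel v m n c" and minc: "\<forall>c'. lin_rel v m n c' \<longrightarrow> \<not> supp m c' \<subset> supp m c"
  shows "\<exists>e. elem_int_rel v m n e \<and> supp m e = supp m c"
proof -
  obtain k where k: "k < m" "c k \<noteq> 0" using rel unfolding lin_rel_def by blast
  define L where "L = {l::rat. l \<noteq> 0 \<and> (\<forall>i<m. l * c i \<in> \<int>)}"
  obtain D where D: "D \<noteq> 0" "\<forall>i<m. of_int D * c i \<in> \<int>" using common_denom by blast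
  have DL: "of_int D \<in> L" using D unfolding L_def by simp
  define N where "N = (LEAST N. \<exists>l\<in>L. nat \<bar>\<lfloor>l * c k\<rfloor>\<bar> = N)"
  have "\<exists>l\<in>L. nat \<bar>\<lfloor>l * c k\<rfloor>\<bar> = N"
    unfolding N_def by (rule LeastI_ex) (use DL in blast)
  then obtain l where l: "l \<in> L" "nat \<bar>\<lfloor>l * c k\<rfloor>\<bar> = N" by blast
  have lmin: "\<And>l'. l' \<in> L \<Longrightarrow> N \<le> nat \<bar>\<lfloor>l' * c k\<rfloor>\<bar>"
    unfolding N_def by (rule Least_le) blast
  define e where "e i = \<lfloor>l * c i\<rfloor>" for i
  have l0: "l \<noteq> 0" using l(1) unfolding L_def by simp
  have e: "of_int (e i) = l * c i" if "i < m" for i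
  proof -
    have "l * c i \<in> \<int>" using l(1) that unfolding L_def by blast
    then obtain z where z: "l * c i = of_int z" by (elim Ints_cases)
    show ?thesis unfolding e_def z by simp
  qed
  have suppe: "supp m e = supp m c"
  proof -
    have "e i = 0 \<longleftrightarrow> c i = 0" if "i < m" for i
      using e[OF that] l0 by (metis mult_eq_0_iff of_int_eq_0_iff)
    then show ?thesis unfolding supp_def by auto
  qed
  have ek: "e k \<noteq> 0" using suppe k unfolding supp_def by auto
  have rel_e: "lin_rel v m n (\<lambda>i. of_int (e i))"
  proof -
    have "(\<Sum>i<m. of_int (e i) * v i j) = l * (\<Sum>i<m. c i * v i j)" for j
      by (simp add: e sum_distrib_left mult.assoc)
    then show ?thesis using rel k ek unfolding lin_rel_def by auto
  qed
  define g where "g = Gcd (e ` {..<m})"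
  have gdvd: "g dvd e i" if "i < m" for i unfolding g_def using that by (intro Gcd_dvd) auto
  have g0: "g \<ge> 0" unfolding g_def by simp
  have gne: "g \<noteq> 0" using gdvd[OF k(1)] ek by auto
  have "g = 1"
  proof (rule ccontr)
    assume "g \<noteq> 1"
    then have g2: "g \<ge> 2" using g0 gne by linarith
    define l' where "l' = l / of_int g"
    have "l' \<in> L" unfolding L_def
    proof (intro CollectI conjI allI impI)
      show "l' \<noteq> 0" using l0 gne unfolding l'_def by simp
      fix i assume i: "i < m"
      obtain t where t: "e i = g * t" using gdvd[OF i] by blast
      have "l' * c i = of_int t" using e[OF i] t gne unfolding l'_def by (simp add: field_simps)
      then show "l' * c i \<in> \<int>" by simp
    qed
    then have "N \<le> nat \<bar>\<lfloor>l' * c k\<rfloor>\<bar>" by (rule lmin)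
    moreover obtain t where t: "e k = g * t" using gdvd[OF k(1)] by blast
    moreover have "l' * c k = of_int t" using e[OF k(1)] t gne unfolding l'_def by (simp add: field_simps)
    ultimately have "nat \<bar>e k\<bar> \<le> nat \<bar>t\<bar>" using l(2) unfolding e_def by simp
    moreover have "\<bar>e k\<bar> = g * \<bar>t\<bar>" using t g0 by (simp add: abs_mult)
    moreover have "t \<noteq> 0" using t ek by auto
    moreover have "1 * \<bar>t\<bar> < g * \<bar>t\<bar>"
      using g2 \<open>t \<noteq> 0\<close> by (intro mult_strict_right_mono) auto
    ultimately show False by simp
  qed
  have "elem_int_rel v m n e"
    unfolding elem_int_rel_def
  proof (intro conjI allI impI)
    show "lin_rel v m n (\<lambda>i. of_int (e i))" by (rule rel_e)
    show "Gcd (e ` {..<m}) = 1" using \<open>g = 1\<close> unfolding g_def .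
    fix c' assume "lin_rel v m n c'"
    then show "\<not> supp m c' \<subset> supp m e" using minc suppe by simp
  qed
  then show ?thesis using suppe by blast
qed


lemma finite_supp: "finite (supp m c)" unfolding supp_def by auto

lemma exists_circuit:
  assumes "lin_rel v m n d"
  shows "\<exists>c. lin_rel v m n c \<and> supp m c \<subseteq> supp m d \<and> (\<forall>c'. lin_rel v m n c' \<longrightarrow> \<not> supp m c' \<subset> supp m c)"
proof -
  define N where "N = (LEAST N. \<exists>c. lin_rel v m n c \<and> supp m c \<subseteq> supp m d \<and> card (supp m c) = N)"
  have "\<exists>c. lin_rel v m n c \<and> supp m c \<subseteq> supp m d \<and> card (supp m c) = N"
    unfolding N_def by (rule LeastI_ex, rule exI[of _ "card (supp m d)"], rule exI[of _ d]) (use assms in simp)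
  then obtain c where c: "lin_rel v m n c" "supp m c \<subseteq> supp m d" "card (supp m c) = N" by blast
  have "\<not> supp m c' \<subset> supp m c" if "lin_rel v m n c'" for c'
  proof
    assume s: "supp m c' \<subset> supp m c"
    then have "card (supp m c') < card (supp m c)" using finite_supp by (rule psubset_card_mono[rotated])
    moreover have "N \<le> card (supp m c')" unfolding N_def
      by (rule Least_le, rule exI[of _ c']) (use that s c(2) in auto)
    ultimately show False using c(3) by simp
  qed
  then show ?thesis using c by blast
qed

lemma indep_QP:
  fixes d :: "nat \<Rightarrow> rat"
  assumes "\<forall>j<n. (\<Sum>i<m. d i * v i j) = 0"
    "\<forall>i<m. i \<notin> G \<longrightarrow> d i \<in> Q_loc (P_set v m n)"
    "\<forall>c. lin_rel v m n c \<longrightarrow> \<not> supp m c \<subseteq> G"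
  shows "\<forall>i<m. d i \<in> Q_loc (P_set v m n)"
  using assms(1,2)
proof (induction "card (supp m d)" arbitrary: d rule: less_induct)
  case less
  show ?case
  proof (cases "\<forall>i<m. d i = 0")
    case True then show ?thesis using Q_loc_0 by simp
  next
    case False
    then have "lin_rel v m n d" using less.prems(1) unfolding lin_rel_def by blast
    then obtain c where c: "lin_rel v m n c" "supp m c \<subseteq> supp m d" "\<forall>c'. lin_rel v m n c' \<longrightarrow> \<not> supp m c' \<subset> supp m c"
      using exists_circuit by blast
    then obtain e where e: "elem_int_rel v m n e" "supp m e = supp m c"
      using normalize_rel by blast
    have rel_e: "lin_rel v m n (\<lambda>i. of_int (e i))" using e(1) unfolding elem_int_rel_def by blast
    then have "\<not> supp m (\<lambda>i. (of_int (e i) :: rat)) \<subseteq> G" using assms(3) by blast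
    then have "\<not> supp m e \<subseteq> G" unfolding supp_of_int .
    then obtain k where k: "k \<in> supp m e" "k \<notin> G" by blast
    have km: "k < m" "e k \<noteq> 0" using k unfolding supp_def by auto
    have dk: "d k \<noteq> 0" using k e(2) c(2) unfolding supp_def by auto
    have ge: "goodint (P_set v m n) (e k)"
      unfolding goodint_def
    proof (intro conjI allI impI)
      show "e k \<noteq> 0" by (rule km(2))
      fix p :: nat assume p: "prime p \<and> int p dvd e k"
      have "e k dvd (\<Prod>i\<in>supp m e. e i)" using k(1) finite_supp by (intro dvd_prodI)
      then have "int p dvd (\<Prod>i\<in>supp m e. e i)" by (rule dvd_trans[OF conjunct2[OF p]])
      then show "p \<in> P_set v m n" unfolding P_set_def using p e(1) by blast
    qed
    define \<mu> where "\<mu> = d k / of_int (e k)"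
    have mu: "\<mu> \<in> Q_loc (P_set v m n)"
      unfolding \<mu>_def using less.prems(2) km(1) k(2) ge by (intro Q_loc_div) auto
    define d' where "d' i = d i - \<mu> * of_int (e i)" for i
    have rel': "\<forall>j<n. (\<Sum>i<m. d' i * v i j) = 0"
    proof (intro allI impI)
      fix j assume j: "j < n"
      have "(\<Sum>i<m. d' i * v i j) = (\<Sum>i<m. d i * v i j) - \<mu> * (\<Sum>i<m. of_int (e i) * v i j)"
      proof -
        have "(\<Sum>i<m. d' i * v i j) = (\<Sum>i<m. d i * v i j - \<mu> * (of_int (e i) * v i j))"
          unfolding d'_def by (simp add: left_diff_distrib mult.assoc)
        also have "\<dots> = (\<Sum>i<m. d i * v i j) - \<mu> * (\<Sum>i<m. of_int (e i) * v i j)"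
          by (simp only: sum_subtractf sum_distrib_left)
        finally show ?thesis .
      qed
      also have "\<dots> = 0" using less.prems(1) rel_e j unfolding lin_rel_def by simp
      finally show "(\<Sum>i<m. d' i * v i j) = 0" .
    qed
    have supp': "supp m d' \<subset> supp m d"
    proof
      show "supp m d' \<subseteq> supp m d"
      proof
        fix i assume i: "i \<in> supp m d'"
        show "i \<in> supp m d"
        proof (rule ccontr)
          assume "i \<notin> supp m d"
          then have "e i = 0" "d i = 0" using i e(2) c(2) unfolding supp_def by auto
          then show False using i unfolding supp_def d'_def by simp
        qed
      qed
      have "d' k = 0" unfolding d'_def \<mu>_def using km(2) by simp
      then show "supp m d' \<noteq> supp m d" using dk km(1) unfolding supp_def by auto
    qed
    have cl: "card (supp m d') < card (supp m d)" by (rule psubset_card_mono[OF finite_supp supp'])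
    have out: "\<forall>i<m. i \<notin> G \<longrightarrow> d' i \<in> Q_loc (P_set v m n)"
    proof (intro allI impI)
      fix i assume "i < m" "i \<notin> G"
      then have "d i \<in> Q_loc (P_set v m n)" using less.prems(2) by blast
      then show "d' i \<in> Q_loc (P_set v m n)" unfolding d'_def
        by (intro Q_loc_diff Q_loc_mult mu Q_loc_int)
    qed
    have IH: "\<forall>i<m. d' i \<in> Q_loc (P_set v m n)" by (rule less.hyps[OF cl rel' out])
    show ?thesis
    proof (intro allI impI)
      fix i assume "i < m"
      then have "d' i + \<mu> * of_int (e i) \<in> Q_loc (P_set v m n)"
        using IH by (intro Q_loc_add Q_loc_mult mu Q_loc_int) auto
      then show "d i \<in> Q_loc (P_set v m n)" unfolding d'_def by simp
    qed
  qed
qed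


lemma main_aux:
  fixes v :: "nat \<Rightarrow> nat \<Rightarrow> rat" and m n :: nat
    and a b c0 :: "nat \<Rightarrow> rat" and w :: "nat \<Rightarrow> rat"
  assumes ab: "\<forall>i<m. a i \<in> Q_loc (P_set v m n) \<and> b i \<in> Q_loc (P_set v m n) \<and> a i \<le> b i"
    and c0: "\<forall>i<m. c0 i \<in> Q_loc (P_set v m n)" "\<forall>j<n. w j = (\<Sum>i<m. c0 i * v i j)"
  shows "(\<forall>i<m. a i \<le> x i \<and> x i \<le> b i) \<Longrightarrow> (\<forall>j<n. w j = (\<Sum>i<m. x i * v i j)) \<Longrightarrow>
    \<exists>y. (\<forall>i<m. y i \<in> Q_loc (P_set v m n) \<and> a i \<le> y i \<and> y i \<le> b i) \<and>
             (\<forall>j<n. w j = (\<Sum>i<m. y i * v i j))"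
proof (induction "card {i. i < m \<and> x i \<notin> Q_loc (P_set v m n)}" arbitrary: x rule: less_induct)
  case less
  define Q where "Q = Q_loc (P_set v m n)"
  define G where "G = {i. i < m \<and> x i \<notin> Q}"
  have finG: "finite G" unfolding G_def by auto
  show ?case
  proof (cases "\<exists>c. lin_rel v m n c \<and> supp m c \<subseteq> G")
    case False
    define d where "d i = x i - c0 i" for i
    have "\<forall>i<m. d i \<in> Q"
      unfolding Q_def
    proof (rule indep_QP[where G = G])
      show "\<forall>j<n. (\<Sum>i<m. d i * v i j) = 0"
      proof (intro allI impI)
        fix j assume j: "j < n"
        have "(\<Sum>i<m. d i * v i j) = (\<Sum>i<m. x i * v i j) - (\<Sum>i<m. c0 i * v i j)"
          unfolding d_def by (simp add: left_diff_distrib sum_subtractf)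
        then show "(\<Sum>i<m. d i * v i j) = 0" using less.prems(2) c0(2) j by simp
      qed
      show "\<forall>i<m. i \<notin> G \<longrightarrow> d i \<in> Q_loc (P_set v m n)"
        unfolding d_def G_def Q_def using c0(1) by (auto intro: Q_loc_diff)
      show "\<forall>c. lin_rel v m n c \<longrightarrow> \<not> supp m c \<subseteq> G" using False by blast
    qed
    then have "\<forall>i<m. x i \<in> Q"
    proof (intro allI impI)
      fix i assume i: "i < m"
      have "d i + c0 i \<in> Q" unfolding Q_def
        by (intro Q_loc_add) (use \<open>\<forall>i<m. d i \<in> Q\<close> c0(1) i in \<open>auto simp: Q_def\<close>)
      then show "x i \<in> Q" unfolding d_def by simp
    qed
    then show ?thesis using less.prems unfolding Q_def by (intro exI[of _ x]) auto
  next
    case True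
    then obtain c where c: "lin_rel v m n c" "supp m c \<subseteq> G" by blast
    define S where "S = supp m c"
    have finS: "finite S" unfolding S_def by (rule finite_supp)
    obtain i1 where i1: "i1 < m" "c i1 \<noteq> 0" using c(1) unfolding lin_rel_def by blast
    then have S_ne: "S \<noteq> {}" unfolding S_def supp_def by auto
    have strict: "a i < x i \<and> x i < b i" if "i \<in> G" for i
    proof -
      have i: "i < m" "x i \<notin> Q" using that unfolding G_def by auto
      then have "a i \<noteq> x i" "b i \<noteq> x i" using ab unfolding Q_def by auto
      then show ?thesis using less.prems(1) i by force
    qed
    define r where "r i = (if c i > 0 then (b i - x i) / c i else (a i - x i) / c i)" for i
    have rpos: "r i > 0" if "i \<in> S" for i
    proof -
      have "i \<in> G" "c i \<noteq> 0" using that c(2) unfolding S_def supp_def by auto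
      then show ?thesis using strict[of i] unfolding r_def
        by (auto simp: divide_pos_pos divide_neg_neg)
    qed
    define t where "t = Min (r ` S)"
    have tin: "t \<in> r ` S" unfolding t_def using finS S_ne by (intro Min_in) auto
    then obtain i0 where i0: "i0 \<in> S" "t = r i0" by blast
    have tle: "t \<le> r i" if "i \<in> S" for i unfolding t_def using finS that by (intro Min_le) auto
    have tpos: "t > 0" using rpos[OF i0(1)] i0(2) by simp
    define x' where "x' i = x i + t * c i" for i
    have box': "\<forall>i<m. a i \<le> x' i \<and> x' i \<le> b i"
    proof (intro allI impI)
      fix i assume i: "i < m"
      show "a i \<le> x' i \<and> x' i \<le> b i"
      proof (cases "c i = 0")
        case True then show ?thesis using less.prems(1) i unfolding x'_def by simp
      next
        case False
        then have iS: "i \<in> S" using i unfolding S_def supp_def by auto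
        have ti: "t \<le> r i" by (rule tle[OF iS])
        show ?thesis
        proof (cases "c i > 0")
          case True
          then have "t \<le> (b i - x i) / c i" using ti unfolding r_def by simp
          then have "t * c i \<le> b i - x i" using True by (simp add: pos_le_divide_eq)
          moreover have "t * c i \<ge> 0" using True tpos by simp
          moreover have "a i \<le> x i" "x i \<le> b i" using less.prems(1) i by auto
          ultimately show ?thesis unfolding x'_def by linarith
        next
          case F: False
          then have neg: "c i < 0" using False by simp
          then have "t \<le> (a i - x i) / c i" using ti F unfolding r_def by simp
          then have "t * c i \<ge> a i - x i" using neg by (simp add: neg_le_divide_eq)
          moreover have "t * c i \<le> 0" using neg tpos by (simp add: mult_nonneg_nonpos)
          moreover have "a i \<le> x i" "x i \<le> b i" using less.prems(1) i by auto
          ultimately show ?thesis unfolding x'_def by linarith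
        qed
      qed
    qed
    have sum': "\<forall>j<n. w j = (\<Sum>i<m. x' i * v i j)"
    proof (intro allI impI)
      fix j assume j: "j < n"
      have "(\<Sum>i<m. x' i * v i j) = (\<Sum>i<m. x i * v i j) + t * (\<Sum>i<m. c i * v i j)"
        unfolding x'_def by (simp add: distrib_right sum.distrib sum_distrib_left mult.assoc)
      also have "\<dots> = w j" using less.prems(2) c(1) j unfolding lin_rel_def by simp
      finally show "w j = (\<Sum>i<m. x' i * v i j)" by simp
    qed
    have i0m: "i0 < m" "c i0 \<noteq> 0" using i0(1) unfolding S_def supp_def by auto
    have x'i0: "x' i0 \<in> Q"
    proof (cases "c i0 > 0")
      case True
      then have "x' i0 = b i0" unfolding x'_def i0(2) r_def by simp
      then show ?thesis using ab i0m unfolding Q_def by simp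
    next
      case False
      then have "x' i0 = a i0" unfolding x'_def i0(2) r_def using i0m by simp
      then show ?thesis using ab i0m unfolding Q_def by simp
    qed
    have G'sub: "{i. i < m \<and> x' i \<notin> Q} \<subseteq> G - {i0}"
    proof
      fix i assume i: "i \<in> {i. i < m \<and> x' i \<notin> Q}"
      show "i \<in> G - {i0}"
      proof (cases "c i = 0")
        case True
        then have "x' i = x i" unfolding x'_def by simp
        then show ?thesis using i x'i0 unfolding G_def by auto
      next
        case False
        then have "i \<in> G" using i c(2) unfolding supp_def by auto
        then show ?thesis using i x'i0 by auto
      qed
    qed
    have "i0 \<in> G" using i0(1) c(2) unfolding S_def by auto
    then have "G - {i0} \<subset> G" by auto
    then have "card {i. i < m \<and> x' i \<notin> Q} < card G"
      using G'sub finG by (meson card_mono card_psubset finite_subset psubset_subset_trans subset_psubset_trans psubset_card_mono)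
    then show ?thesis using less.hyps[of x'] box' sum' unfolding G_def Q_def by blast
  qed
qed

theorem mainTheorem6:
  fixes v :: "nat \<Rightarrow> nat \<Rightarrow> rat" and m n :: nat
    and a b x :: "nat \<Rightarrow> rat" and w :: "nat \<Rightarrow> rat"
  assumes ab: "\<forall>i<m. a i \<in> Q_loc (P_set v m n) \<and> b i \<in> Q_loc (P_set v m n) \<and> a i \<le> b i"
    and w_span: "\<exists>c. (\<forall>i<m. c i \<in> Q_loc (P_set v m n)) \<and> (\<forall>j<n. w j = (\<Sum>i<m. c i * v i j))"
    and x: "\<forall>i<m. a i \<le> x i \<and> x i \<le> b i"
    and wx: "\<forall>j<n. w j = (\<Sum>i<m. x i * v i j)"
  shows "\<exists>y. (\<forall>i<m. y i \<in> Q_loc (P_set v m n) \<and> a i \<le> y i \<and> y i \<le> b i) \<and>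
             (\<forall>j<n. w j = (\<Sum>i<m. y i * v i j))"
proof -
  obtain c0 where c0: "\<forall>i<m. c0 i \<in> Q_loc (P_set v m n)" "\<forall>j<n. w j = (\<Sum>i<m. c0 i * v i j)"
    using w_span by blast
  show ?thesis by (rule main_aux[OF ab c0 x wx])
qed

end
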